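(* Let $F_{ij}$ be a dual-convex $m\times n$ net in $I^3$ that has a reciprocal-parallel net $C_{kl}$. Then the planar net obtained from the top view $\overline{C_{kl}}$ by a rotation through $\pi/2$ is Christoffel dual to the top view $\overline{p^*_{kl}}$ of the metric dual net of $F_{ij}$.
   Context: $I^3$ is $\mathbb{R}^3$ with coordinates $(x,y,z)$; isotropic = parallel to the $z$-axis; top view of $(x,y,z)$ is $(x,y)$. Metric duality: non-isotropic plane $z=P^1x+P^2y-P^3$ $\leftrightarrow$ point $(P^1,P^2,P^3)$. An $m\times n$ net: points $F_{ij}$, $0\le i\le m,0\le j\le n$, with $F_{ij},F_{i+1,j},F_{i+1,j+1},F_{i,j+1}$ consecutive vertices of a convex planar quadrilateral (face $p_{ij}$) for all $0\le i<m,0\le j<n$. Boundary vertices: $i\in\{0,m\}$ or $j\in\{0,n\}$; consecutive faces around non-boundary $F_{ij}$: $p_{i-1,j-1},p_{i,j-1},p_{ij},p_{i-1,j}$. Convex 4-hedral angle with vertex $O$: union of rays from $O$ meeting a convex quadrilateral in a plane not through $O$; flat angles: rays through one side; admissible: isotropic line through $O$ meets its interior. Dual-convex: $m,n\ge2$ and at each non-boundary vertex the four consecutive face planes are planes of four consecutive flat angles of an admissible convex 4-hedral angle. Metric dual: the $(m-1)\times(n-1)$ net of points $p^*_{kl}$. A collection $C_{kl}$, $0\le k<m,0\le l<n$, not all equal, is reciprocal-parallel to $F_{ij}$ if $C_{i,j-1}C_{ij}\parallel F_{i+1,j}F_{ij}$ for all $0\le i<m,0<j<n$ and $C_{i-1,j}C_{ij}\parallel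 F_{i,j+1}F_{ij}$ for all $0<i<m,0\le j<n$. Labeled quadrilaterals $ABCD$, $A'B'C'D'$ are dual if $AB\parallel A'B'$, $BC\parallel B'C'$, $CD\parallel C'D'$, $DA\parallel D'A'$, $AC\parallel B'D'$, $BD\parallel A'C'$; two nets are Christoffel dual if corresponding faces are dual. *)

theory Defs
  imports "HOL-Analysis.Analysis"
begin

text \<open>Points of I^3 are vectors in real^3 (coordinates x = v$1, y = v$2, z = v$3);
  points of the plane are vectors in real^2.\<close>

definition top_view :: "real^3 \<Rightarrow> real^2" where
  "top_view v = vector [v$1, v$2]"

definition rot90 :: "real^2 \<Rightarrow> real^2" where
  "rot90 v = vector [- (v$2), v$1]"

definition par :: "'a::real_vector \<Rightarrow> 'a \<Rightarrow> bool" where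
  "par u v \<longleftrightarrow> (\<exists>c. u = c *\<^sub>R v) \<or> (\<exists>c. v = c *\<^sub>R u)"

definition convex_quad :: "'a::euclidean_space \<Rightarrow> 'a \<Rightarrow> 'a \<Rightarrow> 'a \<Rightarrow> bool" where
  "convex_quad A B C D \<longleftrightarrow>
     open_segment A C \<inter> open_segment B D \<noteq> {} \<and> \<not> collinear {A, B, C, D}"

text \<open>An m x n net: points F i j, 0 \<le> i \<le> m, 0 \<le> j \<le> n, with convex planar faces.\<close>
definition is_net :: "nat \<Rightarrow> nat \<Rightarrow> (nat \<Rightarrow> nat \<Rightarrow> 'a::euclidean_space) \<Rightarrow> bool" where
  "is_net m n F \<longleftrightarrow>
     (\<forall>i<m. \<forall>j<n. convex_quad (F i j) (F (Suc i) j) (F (Suc i) (Suc j)) (F i (Suc j)))"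

definition face_plane :: "(nat \<Rightarrow> nat \<Rightarrow> real^3) \<Rightarrow> nat \<Rightarrow> nat \<Rightarrow> (real^3) set" where
  "face_plane F i j = affine hull {F i j, F (Suc i) j, F (Suc i) (Suc j), F i (Suc j)}"

definition hedral_angle :: "real^3 \<Rightarrow> real^3 \<Rightarrow> real^3 \<Rightarrow> real^3 \<Rightarrow> real^3 \<Rightarrow> (real^3) set" where
  "hedral_angle V A B C D =
     {V + t *\<^sub>R (X - V) | t X. t \<ge> 0 \<and> X \<in> convex hull {A, B, C, D}}"

definition isotropic_line :: "real^3 \<Rightarrow> (real^3) set" where
  "isotropic_line V = {V + s *\<^sub>R axis 3 1 | s. True}"

text \<open>Since any cyclic relabelling or reversal of a
  convex quadrilateral is again one, we may take the flat angles OAB, OBC, OCD, ODA.\<close>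
definition admissible_consecutive_planes ::
  "(real^3) set \<Rightarrow> (real^3) set \<Rightarrow> (real^3) set \<Rightarrow> (real^3) set \<Rightarrow> bool" where
  "admissible_consecutive_planes P1 P2 P3 P4 \<longleftrightarrow>
     (\<exists>V A B C D. convex_quad A B C D \<and> V \<notin> affine hull {A, B, C, D} \<and>
        isotropic_line V \<inter> interior (hedral_angle V A B C D) \<noteq> {} \<and>
        P1 = affine hull {V, A, B} \<and> P2 = affine hull {V, B, C} \<and>
        P3 = affine hull {V, C, D} \<and> P4 = affine hull {V, D, A})"

definition dual_convex :: "nat \<Rightarrow> nat \<Rightarrow> (nat \<Rightarrow> nat \<Rightarrow> real^3) \<Rightarrow> bool" where
  "dual_convex m n F \<longleftrightarrow> is_net m n F \<and> m \<ge> 2 \<and> n \<ge> 2 \<and>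
     (\<forall>i j. 0 < i \<and> i < m \<and> 0 < j \<and> j < n \<longrightarrow>
        admissible_consecutive_planes
          (face_plane F (i - 1) (j - 1)) (face_plane F i (j - 1))
          (face_plane F i j) (face_plane F (i - 1) j))"

text \<open>Metric dual point of the (non-isotropic) face p_kl: the point (P1,P2,P3) such that
  the face plane is z = P1 x + P2 y - P3.\<close>
definition metric_dual :: "(nat \<Rightarrow> nat \<Rightarrow> real^3) \<Rightarrow> nat \<Rightarrow> nat \<Rightarrow> real^3" where
  "metric_dual F k l = (THE P. face_plane F k l =
      {v. v$3 = P$1 * v$1 + P$2 * v$2 - P$3})"

definition reciprocal_parallel ::
  "nat \<Rightarrow> nat \<Rightarrow> (nat \<Rightarrow> nat \<Rightarrow> real^3) \<Rightarrow> (nat \<Rightarrow> nat \<Rightarrow> real^3) \<Rightarrow> bool" where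
  "reciprocal_parallel m n F C \<longleftrightarrow>
     (\<exists>k l k' l'. k < m \<and> l < n \<and> k' < m \<and> l' < n \<and> C k l \<noteq> C k' l') \<and>
     (\<forall>i j. i < m \<and> 0 < j \<and> j < n \<longrightarrow>
        par (C i j - C i (j - 1)) (F i j - F (Suc i) j)) \<and>
     (\<forall>i j. 0 < i \<and> i < m \<and> j < n \<longrightarrow>
        par (C i j - C (i - 1) j) (F i j - F i (Suc j)))"

definition dual_quads :: "'a::real_vector \<Rightarrow> 'a \<Rightarrow> 'a \<Rightarrow> 'a \<Rightarrow> 'a \<Rightarrow> 'a \<Rightarrow> 'a \<Rightarrow> 'a \<Rightarrow> bool" where
  "dual_quads A B C D A' B' C' D' \<longleftrightarrow>
     par (B - A) (B' - A') \<and> par (C - B) (C' - B') \<and> par (D - C) (D' - C') \<and>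
     par (A - D) (A' - D') \<and> par (C - A) (D' - B') \<and> par (D - B) (C' - A')"

definition christoffel_dual ::
  "nat \<Rightarrow> nat \<Rightarrow> (nat \<Rightarrow> nat \<Rightarrow> 'a::real_vector) \<Rightarrow> (nat \<Rightarrow> nat \<Rightarrow> 'a) \<Rightarrow> bool" where
  "christoffel_dual M N G H \<longleftrightarrow>
     (\<forall>k<M. \<forall>l<N. dual_quads
        (G k l) (G (Suc k) l) (G (Suc k) (Suc l)) (G k (Suc l))
        (H k l) (H (Suc k) l) (H (Suc k) (Suc l)) (H k (Suc l)))"

end

theory Submission
  imports Defs
begin

lemma inner3: "(a::real^3) \<bullet> x = a$1*x$1 + a$2*x$2 + a$3*x$3"
  by (simp add: inner_vec_def sum_3)

lemma par_coords2:
  fixes u w :: "real^2"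
  assumes "u$1 * w$2 = u$2 * w$1"
  shows "par u w"
proof (cases "u$1 = 0")
  case True
  show ?thesis
  proof (cases "u$2 = 0")
    case True
    with \<open>u$1 = 0\<close> have "u = 0 *\<^sub>R w" by (simp add: vec_eq_iff forall_2)
    then show ?thesis unfolding par_def by blast
  next
    case False
    have "w = (w$2 / u$2) *\<^sub>R u" using assms True False
      by (simp add: vec_eq_iff forall_2 field_simps)
    then show ?thesis unfolding par_def by blast
  qed
next
  case False
  have "w = (w$1 / u$1) *\<^sub>R u" using assms False
    by (simp add: vec_eq_iff forall_2 field_simps)
  then show ?thesis unfolding par_def by blast
qed

definition lin3 :: "real^3 \<Rightarrow> real^3 \<Rightarrow> bool" where
  "lin3 M w \<longleftrightarrow> w$3 = M$1 * w$1 + M$2 * w$2"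

lemma lin3_par:
  assumes "par X E" "E \<noteq> 0" "lin3 M E"
  shows "lin3 M X"
  using assms(1) unfolding par_def
proof
  assume "\<exists>c. X = c *\<^sub>R E"
  then obtain c where "X = c *\<^sub>R E" by blast
  then show ?thesis using assms(3) by (simp add: lin3_def algebra_simps)
next
  assume "\<exists>c. E = c *\<^sub>R X"
  then obtain c where c: "E = c *\<^sub>R X" by blast
  with assms(2) have "c \<noteq> 0" by auto
  then have "X = (1/c) *\<^sub>R E" using c by simp
  then show ?thesis using assms(3) by (simp add: lin3_def algebra_simps)
qed

lemma convex_quad_rot:
  assumes "convex_quad A B C D" shows "convex_quad B C D A"
  using assms unfolding convex_quad_def
  by (metis insert_commute open_segment_commute inf_commute)

lemma convex_quad_AB:
  assumes "convex_quad A B C D" shows "A \<noteq> B"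
proof
  assume AB: "A = B"
  from assms obtain x where x: "x \<in> open_segment A C" "x \<in> open_segment B D"
    unfolding convex_quad_def by blast
  from x(1) obtain s where s: "0 < s" "s < 1" "x = (1 - s) *\<^sub>R A + s *\<^sub>R C"
    by (auto simp: in_segment)
  from x(2) AB obtain t where t: "0 < t" "t < 1" "x = (1 - t) *\<^sub>R A + t *\<^sub>R D"
    by (auto simp: in_segment)
  have "s *\<^sub>R (C - A) = t *\<^sub>R (D - A)" using s t by (simp add: algebra_simps)
  then have "C = A + (t/s) *\<^sub>R (D - A)" using s
    by (metis (no_types, lifting) add_diff_cancel_left' diff_add_cancel divideR_right less_irrefl scaleR_scaleR divide_inverse_commute)
  then have "C = (t/s) *\<^sub>R D + (1 - t/s) *\<^sub>R A" by (simp add: algebra_simps)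
  then have "collinear {D, C, A}" unfolding collinear_3_expand by blast
  moreover have "{A, B, C, D} = {D, C, A}" using AB by auto
  ultimately show False using assms unfolding convex_quad_def by simp
qed


lemma sign_side:
  fixes a :: "real^3"
  assumes "convex_quad A B C D" "a \<bullet> A = b" "a \<bullet> B = b"
  shows "\<exists>\<sigma>::real. \<sigma> \<noteq> 0 \<and> (\<forall>X\<in>{A,B,C,D}. \<sigma> * (a \<bullet> X - b) \<ge> 0)"
proof -
  from assms obtain x where x: "x \<in> open_segment A C" "x \<in> open_segment B D"
    unfolding convex_quad_def by blast
  from x(1) obtain s where s: "0 < s" "s < 1" "x = (1 - s) *\<^sub>R A + s *\<^sub>R C"
    by (auto simp: in_segment)
  from x(2) obtain t where t: "0 < t" "t < 1" "x = (1 - t) *\<^sub>R B + t *\<^sub>R D"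
    by (auto simp: in_segment)
  have "a \<bullet> x = (1 - s) * b + s * (a \<bullet> C)" using s assms by (simp add: inner_add_right)
  moreover have "a \<bullet> x = (1 - t) * b + t * (a \<bullet> D)" using t assms by (simp add: inner_add_right)
  ultimately have e: "s * (a \<bullet> C - b) = t * (a \<bullet> D - b)" by (simp add: algebra_simps)
  show ?thesis
  proof (cases "a \<bullet> C - b \<ge> 0")
    case True
    then have "s * (a \<bullet> C - b) \<ge> 0" using s by simp
    then have "t * (a \<bullet> D - b) \<ge> 0" using e by simp
    then have "a \<bullet> D - b \<ge> 0" using t by (simp add: zero_le_mult_iff)
    then show ?thesis using True assms by (intro exI[of _ 1]) auto
  next
    case False
    then have "s * (a \<bullet> C - b) < 0" using s by (simp add: mult_pos_neg)
    then have "t * (a \<bullet> D - b) < 0" using e by simp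
    then have "a \<bullet> D - b < 0" using t by (simp add: mult_less_0_iff)
    then show ?thesis using False assms by (intro exI[of _ "-1"]) auto
  qed
qed

lemma noniso_AB:
  assumes q: "convex_quad A B C D"
    and iso: "isotropic_line V \<inter> interior (hedral_angle V A B C D) \<noteq> {}"
    and nc: "\<not> collinear (affine hull {V, A, B})"
  shows "\<exists>a b. a$3 \<noteq> 0 \<and> affine hull {V, A, B} = {x. a \<bullet> x = b}"
proof -
  have nc3: "\<not> collinear {V, A, B}" using nc collinear_affine_hull_collinear by blast
  then have d: "V \<noteq> A" "V \<noteq> B" "A \<noteq> B" "\<not> affine_dependent {V, A, B}"
    using collinear_3_eq_affine_dependent by blast+
  then have "of_nat (card {V, A, B}) = aff_dim {V, A, B} + 1"
    using aff_dim_affine_independent by blast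
  moreover have "card {V, A, B} = 3" using d by auto
  ultimately have "aff_dim {V, A, B} = 2" by simp
  then have "\<exists>a b. a \<noteq> 0 \<and> affine hull {V, A, B} = {x. a \<bullet> x = b}"
    using aff_dim_eq_hyperplane[of "{V, A, B}"] by simp
  then obtain a b where ab: "a \<noteq> 0" "affine hull {V, A, B} = {x. a \<bullet> x = b}"
    by blast
  have "V \<in> affine hull {V, A, B}" "A \<in> affine hull {V, A, B}" "B \<in> affine hull {V, A, B}"
    by (simp_all add: hull_inc)
  then have V: "a \<bullet> V = b" and A: "a \<bullet> A = b" and B: "a \<bullet> B = b"
    using ab(2) by (metis mem_Collect_eq)+
  obtain \<sigma> :: real where sg: "\<sigma> \<noteq> 0" "\<forall>X\<in>{A,B,C,D}. \<sigma> * (a \<bullet> X - b) \<ge> 0"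
    using sign_side[OF q A B] by blast
  let ?S = "{x. (\<sigma> *\<^sub>R a) \<bullet> x \<ge> \<sigma> * b}"
  have "convex ?S" by (rule convex_halfspace_ge)
  moreover have "{A, B, C, D} \<subseteq> ?S" using sg(2) by (auto simp: algebra_simps)
  ultimately have hullS: "convex hull {A, B, C, D} \<subseteq> ?S" by (metis hull_minimal)
  have HS: "\<sigma> * (a \<bullet> z - b) \<ge> 0" if "z \<in> hedral_angle V A B C D" for z
  proof -
    from that obtain t X where tX: "z = V + t *\<^sub>R (X - V)" "t \<ge> 0" "X \<in> convex hull {A, B, C, D}"
      unfolding hedral_angle_def by blast
    have h1: "\<sigma> * (a \<bullet> X - b) \<ge> 0" using hullS tX(3) by (auto simp: algebra_simps)
    have "a \<bullet> z = a \<bullet> V + t * (a \<bullet> X - a \<bullet> V)" unfolding tX(1)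
      by (simp add: inner_add_right inner_diff_right)
    then have h2: "a \<bullet> z - b = t * (a \<bullet> X - b)" using V by simp
    have "t * (\<sigma> * (a \<bullet> X - b)) \<ge> 0" using tX(2) h1 by simp
    then show ?thesis unfolding h2 by (simp add: algebra_simps)
  qed
  show ?thesis
  proof (intro exI conjI)
    show "affine hull {V, A, B} = {x. a \<bullet> x = b}" by (rule ab(2))
    show "a$3 \<noteq> 0"
    proof
      assume a3: "a$3 = 0"
      from iso obtain y where y: "y \<in> isotropic_line V" "y \<in> interior (hedral_angle V A B C D)"
        by blast
      from y(1) obtain s where ys: "y = V + s *\<^sub>R axis 3 1" unfolding isotropic_line_def by blast
      have ay: "a \<bullet> y = b" using ys V a3 by (simp add: inner_add_right inner_axis)
      from y(2) obtain e where e: "e > 0" "ball y e \<subseteq> hedral_angle V A B C D"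
        using mem_interior by blast
      define \<delta> where "\<delta> = e / (2 * norm a)"
      have na: "norm a > 0" using ab(1) by simp
      have dp: "\<delta> > 0" using e na by (simp add: \<delta>_def)
      have "norm (\<delta> *\<^sub>R a) = e / 2" using na e by (simp add: \<delta>_def)
      then have "y + \<delta> *\<^sub>R a \<in> ball y e" "y - \<delta> *\<^sub>R a \<in> ball y e"
        using e by (auto simp: dist_norm)
      then have h1: "\<sigma> * (a \<bullet> (y + \<delta> *\<^sub>R a) - b) \<ge> 0" and h2: "\<sigma> * (a \<bullet> (y - \<delta> *\<^sub>R a) - b) \<ge> 0"
        using HS e(2) by blast+
      have "a \<bullet> (y + \<delta> *\<^sub>R a) - b = \<delta> * (a \<bullet> a)" using ay by (simp add: inner_add_right)
      moreover have "a \<bullet> (y - \<delta> *\<^sub>R a) - b = - (\<delta> * (a \<bullet> a))" using ay by (simp add: inner_diff_right)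
      ultimately have "\<sigma> * (\<delta> * (a \<bullet> a)) = 0" using h1 h2 by simp
      moreover have "a \<bullet> a > 0" using ab(1) by simp
      ultimately show False using sg(1) dp by simp
    qed
  qed
qed


lemma hedral_rot: "hedral_angle V B C D A = hedral_angle V A B C D"
proof -
  have "{B, C, D, A} = {A, B, C, D}" by auto
  then show ?thesis unfolding hedral_angle_def by simp
qed

lemma adm_plane:
  assumes "admissible_consecutive_planes P1 P2 P3 P4" "P \<in> {P1, P2, P3, P4}" "\<not> collinear P"
  shows "\<exists>a b. a$3 \<noteq> 0 \<and> P = {x. a \<bullet> x = b}"
proof -
  from assms(1) obtain V A B C D where q: "convex_quad A B C D"
    and iso: "isotropic_line V \<inter> interior (hedral_angle V A B C D) \<noteq> {}"
    and P: "P1 = affine hull {V, A, B}" "P2 = affine hull {V, B, C}"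
       "P3 = affine hull {V, C, D}" "P4 = affine hull {V, D, A}"
    unfolding admissible_consecutive_planes_def by blast
  have q2: "convex_quad B C D A" using q by (rule convex_quad_rot)
  have q3: "convex_quad C D A B" using q2 by (rule convex_quad_rot)
  have q4: "convex_quad D A B C" using q3 by (rule convex_quad_rot)
  have h2: "hedral_angle V B C D A = hedral_angle V A B C D" by (rule hedral_rot)
  have h3: "hedral_angle V C D A B = hedral_angle V A B C D"
    using hedral_rot[of V C D A B] hedral_rot[of V B C D A] h2 by simp
  have h4: "hedral_angle V D A B C = hedral_angle V A B C D"
    using hedral_rot[of V D A B C] h3 by simp
  from assms(2) consider "P = P1" | "P = P2" | "P = P3" | "P = P4" by blast
  then show ?thesis
  proof cases
    case 1 then show ?thesis using noniso_AB[OF q iso] assms(3) P by simp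
  next
    case 2 then show ?thesis using noniso_AB[OF q2] iso h2 assms(3) P by simp
  next
    case 3 then show ?thesis using noniso_AB[OF q3] iso h3 assms(3) P by simp
  next
    case 4 then show ?thesis using noniso_AB[OF q4] iso h4 assms(3) P by simp
  qed
qed

definition plset :: "real^3 \<Rightarrow> (real^3) set" where
  "plset M = {v. v$3 = M$1 * v$1 + M$2 * v$2 - M$3}"

lemma plset_inj:
  assumes "plset P = plset Q" shows "P = Q"
proof -
  have "vector [0, 0, - P$3] \<in> plset P" by (simp add: plset_def)
  then have "vector [0, 0, - P$3] \<in> plset Q" using assms by simp
  then have e3: "P$3 = Q$3" by (simp add: plset_def)
  have "vector [1, 0, P$1 - P$3] \<in> plset P" by (simp add: plset_def)
  then have "vector [1, 0, P$1 - P$3] \<in> plset Q" using assms by simp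
  then have e1: "P$1 = Q$1" using e3 by (simp add: plset_def)
  have "vector [0, 1, P$2 - P$3] \<in> plset P" by (simp add: plset_def)
  then have "vector [0, 1, P$2 - P$3] \<in> plset Q" using assms by simp
  then have e2: "P$2 = Q$2" using e3 by (simp add: plset_def)
  show ?thesis using e1 e2 e3 by (simp add: vec_eq_iff forall_3)
qed

lemma md:
  assumes "a$3 \<noteq> 0" "P = {x. a \<bullet> x = b}"
  shows "P = plset (THE M. P = {v. v$3 = M$1 * v$1 + M$2 * v$2 - M$3})"
proof -
  define M0 :: "real^3" where "M0 = vector [- (a$1 / a$3), - (a$2 / a$3), - (b / a$3)]"
  have "P = plset M0"
  proof (rule set_eqI)
    fix x :: "real^3"
    have "(a \<bullet> x = b) \<longleftrightarrow> (x$3 = M0$1 * x$1 + M0$2 * x$2 - M0$3)"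
      using assms(1) unfolding M0_def inner3 by (simp add: field_simps)
    then show "x \<in> P \<longleftrightarrow> x \<in> plset M0" using assms(2) by (simp add: plset_def)
  qed
  moreover have "(THE M. P = plset M) = M0"
    using \<open>P = plset M0\<close> plset_inj by (intro the_equality) auto
  ultimately show ?thesis unfolding plset_def by simp
qed

lemma face_eq:
  assumes dc: "dual_convex m n F" and kl: "k < m" "l < n"
  shows "face_plane F k l = plset (metric_dual F k l)"
proof -
  define i where "i = (if k = 0 then 1 else k)"
  define j where "j = (if l = 0 then 1 else l)"
  have m2: "m \<ge> 2" and n2: "n \<ge> 2" using dc unfolding dual_convex_def by auto
  have ij: "0 < i" "i < m" "0 < j" "j < n" using kl m2 n2 unfolding i_def j_def by auto
  have adm: "admissible_consecutive_planes
          (face_plane F (i - 1) (j - 1)) (face_plane F i (j - 1))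
          (face_plane F i j) (face_plane F (i - 1) j)"
    using dc ij unfolding dual_convex_def by blast
  have mem: "face_plane F k l \<in> {face_plane F (i - 1) (j - 1), face_plane F i (j - 1),
          face_plane F i j, face_plane F (i - 1) j}"
  proof -
    have "k = i - 1 \<or> k = i" "l = j - 1 \<or> l = j" unfolding i_def j_def by simp_all
    then show ?thesis by (elim disjE) simp_all
  qed
  have "convex_quad (F k l) (F (Suc k) l) (F (Suc k) (Suc l)) (F k (Suc l))"
    using dc kl unfolding dual_convex_def is_net_def by blast
  then have "\<not> collinear (face_plane F k l)"
    unfolding face_plane_def convex_quad_def collinear_affine_hull_collinear by blast
  then obtain a b where ab: "a$3 \<noteq> 0" "face_plane F k l = {x. a \<bullet> x = b}"
    using adm_plane[OF adm mem] by blast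
  show ?thesis using md[OF ab] unfolding metric_dual_def .
qed

lemma in_face:
  assumes "dual_convex m n F" "k < m" "l < n"
  shows "F k l \<in> plset (metric_dual F k l)" "F (Suc k) l \<in> plset (metric_dual F k l)"
    "F (Suc k) (Suc l) \<in> plset (metric_dual F k l)" "F k (Suc l) \<in> plset (metric_dual F k l)"
proof -
  have e: "face_plane F k l = plset (metric_dual F k l)" by (rule face_eq[OF assms])
  let ?S = "{F k l, F (Suc k) l, F (Suc k) (Suc l), F k (Suc l)}"
  have "F k l \<in> affine hull ?S" "F (Suc k) l \<in> affine hull ?S"
    "F (Suc k) (Suc l) \<in> affine hull ?S" "F k (Suc l) \<in> affine hull ?S"
    by (simp_all add: hull_inc)
  then show "F k l \<in> plset (metric_dual F k l)" "F (Suc k) l \<in> plset (metric_dual F k l)"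
    "F (Suc k) (Suc l) \<in> plset (metric_dual F k l)" "F k (Suc l) \<in> plset (metric_dual F k l)"
    using e unfolding face_plane_def by simp_all
qed

lemma lin3_diff:
  assumes "X \<in> plset M" "Y \<in> plset M" shows "lin3 M (X - Y)"
  using assms by (simp add: plset_def lin3_def algebra_simps)

lemma quad_ne:
  assumes "dual_convex m n F" "k < m" "l < n"
  shows "F k l \<noteq> F (Suc k) l" "F k l \<noteq> F k (Suc l)"
proof -
  have q: "convex_quad (F k l) (F (Suc k) l) (F (Suc k) (Suc l)) (F k (Suc l))"
    using assms unfolding dual_convex_def is_net_def by blast
  show "F k l \<noteq> F (Suc k) l" using convex_quad_AB[OF q] .
  have "convex_quad (F k (Suc l)) (F k l) (F (Suc k) l) (F (Suc k) (Suc l))"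
    using convex_quad_rot[OF convex_quad_rot[OF convex_quad_rot[OF q]]] .
  from convex_quad_AB[OF this] show "F k l \<noteq> F k (Suc l)" by (rule not_sym)
qed

theorem corollary1:
  fixes m n :: nat and F C :: "nat \<Rightarrow> nat \<Rightarrow> real^3"
  assumes "dual_convex m n F"
    and "reciprocal_parallel m n F C"
  shows "christoffel_dual (m - 1) (n - 1)
           (\<lambda>k l. rot90 (top_view (C k l)))
           (\<lambda>k l. top_view (metric_dual F k l))"
  unfolding christoffel_dual_def
proof (intro allI impI)
  fix k l assume k: "k < m - 1" and l: "l < n - 1"
  note dc = assms(1)
  have rp1: "\<And>i j. i < m \<Longrightarrow> 0 < j \<Longrightarrow> j < n \<Longrightarrow> par (C i j - C i (j - 1)) (F i j - F (Suc i) j)"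
   and rp2: "\<And>i j. 0 < i \<Longrightarrow> i < m \<Longrightarrow> j < n \<Longrightarrow> par (C i j - C (i - 1) j) (F i j - F i (Suc j))"
    using assms(2) unfolding reciprocal_parallel_def by auto
  define M1 where "M1 = metric_dual F k l"
  define M2 where "M2 = metric_dual F (Suc k) l"
  define M3 where "M3 = metric_dual F (Suc k) (Suc l)"
  define M4 where "M4 = metric_dual F k (Suc l)"
  have km: "k < m" "Suc k < m" and ln: "l < n" "Suc l < n" using k l by auto
  note f1 = in_face[OF dc km(1) ln(1), folded M1_def]
  note f2 = in_face[OF dc km(2) ln(1), folded M2_def]
  note f3 = in_face[OF dc km(2) ln(2), folded M3_def]
  note f4 = in_face[OF dc km(1) ln(2), folded M4_def]
  have p1: "par (C (Suc k) l - C k l) (F (Suc k) l - F (Suc k) (Suc l))"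
    using rp2[of "Suc k" l] km ln by simp
  have ne1: "F (Suc k) l - F (Suc k) (Suc l) \<noteq> 0" using quad_ne(2)[OF dc km(2) ln(1)] by simp
  have a1: "lin3 M1 (C (Suc k) l - C k l)" "lin3 M2 (C (Suc k) l - C k l)"
    using lin3_par[OF p1 ne1] lin3_diff f1 f2 by blast+
  have p2: "par (C (Suc k) (Suc l) - C (Suc k) l) (F (Suc k) (Suc l) - F (Suc (Suc k)) (Suc l))"
    using rp1[of "Suc k" "Suc l"] km ln by simp
  have ne2: "F (Suc k) (Suc l) - F (Suc (Suc k)) (Suc l) \<noteq> 0" using quad_ne(1)[OF dc km(2) ln(2)] by simp
  have a2: "lin3 M2 (C (Suc k) (Suc l) - C (Suc k) l)" "lin3 M3 (C (Suc k) (Suc l) - C (Suc k) l)"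
    using lin3_par[OF p2 ne2] lin3_diff f2 f3 by blast+
  have p3: "par (C (Suc k) (Suc l) - C k (Suc l)) (F (Suc k) (Suc l) - F (Suc k) (Suc (Suc l)))"
    using rp2[of "Suc k" "Suc l"] km ln by simp
  have ne3: "F (Suc k) (Suc l) - F (Suc k) (Suc (Suc l)) \<noteq> 0" using quad_ne(2)[OF dc km(2) ln(2)] by simp
  have a3: "lin3 M3 (C (Suc k) (Suc l) - C k (Suc l))" "lin3 M4 (C (Suc k) (Suc l) - C k (Suc l))"
    using lin3_par[OF p3 ne3] lin3_diff f3 f4 by blast+
  have p4: "par (C k (Suc l) - C k l) (F k (Suc l) - F (Suc k) (Suc l))"
    using rp1[of k "Suc l"] km ln by simp
  have ne4: "F k (Suc l) - F (Suc k) (Suc l) \<noteq> 0" using quad_ne(1)[OF dc km(1) ln(2)] by simp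
  have a4: "lin3 M4 (C k (Suc l) - C k l)" "lin3 M1 (C k (Suc l) - C k l)"
    using lin3_par[OF p4 ne4] lin3_diff f4 f1 by blast+
  have u1: "C (Suc k) l $ 3 - C k l $ 3 = M1$1 * (C (Suc k) l $ 1 - C k l $ 1) + M1$2 * (C (Suc k) l $ 2 - C k l $ 2)"
     "C (Suc k) l $ 3 - C k l $ 3 = M2$1 * (C (Suc k) l $ 1 - C k l $ 1) + M2$2 * (C (Suc k) l $ 2 - C k l $ 2)"
    using a1 unfolding lin3_def by simp_all
  have u2: "C (Suc k) (Suc l) $ 3 - C (Suc k) l $ 3 = M2$1 * (C (Suc k) (Suc l) $ 1 - C (Suc k) l $ 1) + M2$2 * (C (Suc k) (Suc l) $ 2 - C (Suc k) l $ 2)"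
     "C (Suc k) (Suc l) $ 3 - C (Suc k) l $ 3 = M3$1 * (C (Suc k) (Suc l) $ 1 - C (Suc k) l $ 1) + M3$2 * (C (Suc k) (Suc l) $ 2 - C (Suc k) l $ 2)"
    using a2 unfolding lin3_def by simp_all
  have u3: "C (Suc k) (Suc l) $ 3 - C k (Suc l) $ 3 = M3$1 * (C (Suc k) (Suc l) $ 1 - C k (Suc l) $ 1) + M3$2 * (C (Suc k) (Suc l) $ 2 - C k (Suc l) $ 2)"
     "C (Suc k) (Suc l) $ 3 - C k (Suc l) $ 3 = M4$1 * (C (Suc k) (Suc l) $ 1 - C k (Suc l) $ 1) + M4$2 * (C (Suc k) (Suc l) $ 2 - C k (Suc l) $ 2)"
    using a3 unfolding lin3_def by simp_all
  have u4: "C k (Suc l) $ 3 - C k l $ 3 = M4$1 * (C k (Suc l) $ 1 - C k l $ 1) + M4$2 * (C k (Suc l) $ 2 - C k l $ 2)"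
     "C k (Suc l) $ 3 - C k l $ 3 = M1$1 * (C k (Suc l) $ 1 - C k l $ 1) + M1$2 * (C k (Suc l) $ 2 - C k l $ 2)"
    using a4 unfolding lin3_def by simp_all
  show "dual_quads
        (rot90 (top_view (C k l))) (rot90 (top_view (C (Suc k) l)))
        (rot90 (top_view (C (Suc k) (Suc l)))) (rot90 (top_view (C k (Suc l))))
        (top_view (metric_dual F k l)) (top_view (metric_dual F (Suc k) l))
        (top_view (metric_dual F (Suc k) (Suc l))) (top_view (metric_dual F k (Suc l)))"
    unfolding dual_quads_def M1_def[symmetric] M2_def[symmetric] M3_def[symmetric] M4_def[symmetric]
  proof (intro conjI par_coords2)
    show "(rot90 (top_view (C (Suc k) l)) - rot90 (top_view (C k l))) $ 1 * (top_view M2 - top_view M1) $ 2 =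
      (rot90 (top_view (C (Suc k) l)) - rot90 (top_view (C k l))) $ 2 * (top_view M2 - top_view M1) $ 1"
      using u1 by (simp add: rot90_def top_view_def algebra_simps)
    show "(rot90 (top_view (C (Suc k) (Suc l))) - rot90 (top_view (C (Suc k) l))) $ 1 * (top_view M3 - top_view M2) $ 2 =
      (rot90 (top_view (C (Suc k) (Suc l))) - rot90 (top_view (C (Suc k) l))) $ 2 * (top_view M3 - top_view M2) $ 1"
      using u2 by (simp add: rot90_def top_view_def algebra_simps)
    show "(rot90 (top_view (C k (Suc l))) - rot90 (top_view (C (Suc k) (Suc l)))) $ 1 * (top_view M4 - top_view M3) $ 2 =
      (rot90 (top_view (C k (Suc l))) - rot90 (top_view (C (Suc k) (Suc l)))) $ 2 * (top_view M4 - top_view M3) $ 1"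
      using u3 by (simp add: rot90_def top_view_def algebra_simps)
    show "(rot90 (top_view (C k l)) - rot90 (top_view (C k (Suc l)))) $ 1 * (top_view M1 - top_view M4) $ 2 =
      (rot90 (top_view (C k l)) - rot90 (top_view (C k (Suc l)))) $ 2 * (top_view M1 - top_view M4) $ 1"
      using u4 by (simp add: rot90_def top_view_def algebra_simps)
    show "(rot90 (top_view (C (Suc k) (Suc l))) - rot90 (top_view (C k l))) $ 1 * (top_view M4 - top_view M2) $ 2 =
      (rot90 (top_view (C (Suc k) (Suc l))) - rot90 (top_view (C k l))) $ 2 * (top_view M4 - top_view M2) $ 1"
      using u1(2) u2(1) u3(2) u4(1) by (simp add: rot90_def top_view_def algebra_simps)
    show "(rot90 (top_view (C k (Suc l))) - rot90 (top_view (C (Suc k) l))) $ 1 * (top_view M3 - top_view M1) $ 2 =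
      (rot90 (top_view (C k (Suc l))) - rot90 (top_view (C (Suc k) l))) $ 2 * (top_view M3 - top_view M1) $ 1"
      using u1(1) u2(2) u3(1) u4(2) by (simp add: rot90_def top_view_def algebra_simps)
  qed
qed

thm_deps inner3 par_coords2 lin3_par convex_quad_rot convex_quad_AB sign_side noniso_AB hedral_rot adm_plane plset_inj md face_eq in_face lin3_diff quad_ne corollary1

end
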